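(* In the setting described in the context, with $\alpha>0$, for every $\xi\in\mathcal{L}^*$ we have $$\limsup_{\eta\to\xi}\frac{|F_\psi(\xi)-F_\psi(\eta)|}{|\xi-\eta|^\alpha}=\infty.$$
   Context: Setting: $X\subset\mathbb{R}$ compact connected, $A=\{0,\dots,d\}$, $f_a:X\to\mathrm{Int}X$ differentiable contractions satisfying strong separation ($f_a(\mathrm{Int}X)\subset\mathrm{Int}X$, $f_a(X)\cap f_b(X)=\emptyset$ for $a\ne b$) and the Hölder condition ($C^{1+\epsilon}$ diffeomorphic extensions $\tilde f_a$ to an open interval $Y\supset X$ with $\tilde f_a(Y)\subset Y$); $f_0(X)$ is the leftmost and $f_1(X)$ the rightmost interval among the $f_a(X)$. Limit set $\mathcal{L}=\bigcap_n\bigcup_{\omega\in A^n}f_\omega(X)$, identified with $A^{\mathbb{N}}$ via the coding map; cylinders $[x_1\dots x_n]$; Birkhoff sums $S_ng=\sum_{k<n}g\circ\sigma^k$. $\phi(\xi)=\log|f'_{x_1}(\xi)|$. Pressure $P(g)=\lim_n\frac1n\log\sum_{\omega\in A^n}\exp(\sup_{[\omega]}S_ng)$. $\psi$ is Hölder continuous with $\psi<0$, $P(\psi)=0$, $\psi>\alpha\phi$; $\nu_\psi$ is its Gibbs measure ($\nu_\psi([\omega])\asymp e^{S_n\psi(\xi)}$ uniformly for $\xi\in[\omega]$, $\omega\in A^n$), and $F_\psi(x)=\nu_\psi((-\infty,x])$, $x\in\mathbb{R}$. $\mathcal{E}$ is the set of $(x_1x_2\dots)\in\mathcal{L}$ for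 which there are $i\in\{0,1\}$ and $n$ with $x_k=i$ for all $k\ge n$, and $\mathcal{L}^*=\mathcal{L}\setminus\mathcal{E}$. *)

theory Defs
  imports "HOL-Probability.Probability"
begin

text \<open>Sequences x = (x_1 x_2 ...) are represented as functions nat => nat with
  x_1 = x 0. Finite words are lists.\<close>

definition seqs :: "nat \<Rightarrow> (nat \<Rightarrow> nat) set" where
  "seqs d = {x. \<forall>k. x k \<le> d}"

definition words :: "nat \<Rightarrow> nat \<Rightarrow> nat list set" where
  "words d n = {w. length w = n \<and> (\<forall>a\<in>set w. a \<le> d)}"

definition cyl :: "nat \<Rightarrow> nat list \<Rightarrow> (nat \<Rightarrow> nat) set" where
  "cyl d w = {x \<in> seqs d. \<forall>i<length w. x i = w ! i}"

definition shift :: "(nat \<Rightarrow> nat) \<Rightarrow> (nat \<Rightarrow> nat)" where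
  "shift x = (\<lambda>i. x (Suc i))"

definition birkhoff :: "nat \<Rightarrow> ((nat \<Rightarrow> nat) \<Rightarrow> real) \<Rightarrow> (nat \<Rightarrow> nat) \<Rightarrow> real" where
  "birkhoff n g x = (\<Sum>k<n. g ((shift ^^ k) x))"

definition has_pressure :: "nat \<Rightarrow> ((nat \<Rightarrow> nat) \<Rightarrow> real) \<Rightarrow> real \<Rightarrow> bool" where
  "has_pressure d g p \<longleftrightarrow>
     (\<lambda>n. ln (\<Sum>w\<in>words d n. exp (SUP x\<in>cyl d w. birkhoff n g x)) / real n)
       \<longlonglongrightarrow> p"

text \<open>Hoelder continuity w.r.t. the standard metric on A^N.\<close>
definition holder_seq :: "nat \<Rightarrow> ((nat \<Rightarrow> nat) \<Rightarrow> real) \<Rightarrow> bool" where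
  "holder_seq d g \<longleftrightarrow> (\<exists>C \<theta>. 0 < \<theta> \<and> \<theta> < 1 \<and>
     (\<forall>x\<in>seqs d. \<forall>y\<in>seqs d. \<forall>n. (\<forall>i<n. x i = y i) \<longrightarrow> \<bar>g x - g y\<bar> \<le> C * \<theta> ^ n))"

definition comp_word :: "(nat \<Rightarrow> real \<Rightarrow> real) \<Rightarrow> nat list \<Rightarrow> real \<Rightarrow> real" where
  "comp_word f w = foldr (\<lambda>a g. f a \<circ> g) w id"

definition limit_set :: "(nat \<Rightarrow> real \<Rightarrow> real) \<Rightarrow> nat \<Rightarrow> real set \<Rightarrow> real set" where
  "limit_set f d X = (\<Inter>n. \<Union>w\<in>words d n. comp_word f w ` X)"

definition coding :: "(nat \<Rightarrow> real \<Rightarrow> real) \<Rightarrow> real set \<Rightarrow> (nat \<Rightarrow> nat) \<Rightarrow> real" where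
  "coding f X x = (THE y. \<forall>n. y \<in> comp_word f (map x [0..<n]) ` X)"

text \<open>phi(xi) = log |f'_{x_1}(sigma xi)|, the derivative of f_{x_1} taken at the point
  coded by sigma xi (so that pi xi = f_{x_1}(pi (sigma xi))).\<close>
definition phi :: "(nat \<Rightarrow> real \<Rightarrow> real) \<Rightarrow> real set \<Rightarrow> (nat \<Rightarrow> nat) \<Rightarrow> real" where
  "phi f X x = ln \<bar>deriv (f (x 0)) (coding f X (shift x))\<bar>"

definition ifs_setting :: "nat \<Rightarrow> real set \<Rightarrow> (nat \<Rightarrow> real \<Rightarrow> real) \<Rightarrow> bool" where
  "ifs_setting d X f \<longleftrightarrow>
     1 \<le> d \<and> compact X \<and> connected X \<and>
     \<comment> \<open>f_a : X -> Int X differentiable contractions\<close>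
     (\<forall>a\<le>d. f a ` X \<subseteq> interior X) \<and>
     (\<forall>a\<le>d. \<forall>x\<in>X. f a differentiable (at x within X)) \<and>
     (\<forall>a\<le>d. \<exists>c<1. \<forall>x\<in>X. \<forall>y\<in>X. \<bar>f a x - f a y\<bar> \<le> c * \<bar>x - y\<bar>) \<and>
     \<comment> \<open>strong separation\<close>
     (\<forall>a\<le>d. f a ` interior X \<subseteq> interior X) \<and>
     (\<forall>a\<le>d. \<forall>b\<le>d. a \<noteq> b \<longrightarrow> f a ` X \<inter> f b ` X = {}) \<and>
     \<comment> \<open>Hoelder condition: C^{1+eps} diffeomorphic extensions to an open interval Y\<close>
     (\<exists>p q \<epsilon>. p < q \<and> X \<subseteq> {p<..<q} \<and> 0 < \<epsilon> \<and> \<epsilon> \<le> 1 \<and>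
        (\<forall>a\<le>d. \<exists>g. (\<forall>x\<in>X. g x = f a x) \<and> g ` {p<..<q} \<subseteq> {p<..<q} \<and>
            inj_on g {p<..<q} \<and>
            (\<forall>y\<in>{p<..<q}. g differentiable (at y) \<and> deriv g y \<noteq> 0) \<and>
            (\<exists>C. \<forall>x\<in>{p<..<q}. \<forall>y\<in>{p<..<q}.
                 \<bar>deriv g x - deriv g y\<bar> \<le> C * \<bar>x - y\<bar> powr \<epsilon>))) \<and>
     \<comment> \<open>f_0(X) leftmost, f_1(X) rightmost\<close>
     (\<forall>a\<le>d. a \<noteq> 0 \<longrightarrow> (\<forall>u\<in>f 0 ` X. \<forall>v\<in>f a ` X. u < v)) \<and>
     (\<forall>a\<le>d. a \<noteq> 1 \<longrightarrow> (\<forall>u\<in>f a ` X. \<forall>v\<in>f 1 ` X. u < v))"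

definition gibbs_measure :: "nat \<Rightarrow> real set \<Rightarrow> (nat \<Rightarrow> real \<Rightarrow> real) \<Rightarrow>
    ((nat \<Rightarrow> nat) \<Rightarrow> real) \<Rightarrow> real measure \<Rightarrow> bool" where
  "gibbs_measure d X f \<psi> \<nu> \<longleftrightarrow>
     sets \<nu> = sets borel \<and> prob_space \<nu> \<and> emeasure \<nu> (limit_set f d X) = 1 \<and>
     (\<exists>C\<ge>1. \<forall>n. \<forall>w\<in>words d n. \<forall>x\<in>cyl d w.
        exp (birkhoff n \<psi> x) / C \<le> measure \<nu> (coding f X ` cyl d w) \<and>
        measure \<nu> (coding f X ` cyl d w) \<le> C * exp (birkhoff n \<psi> x))"

definition distr_fun :: "real measure \<Rightarrow> real \<Rightarrow> real" where
  "distr_fun \<nu> x = measure \<nu> {..x}"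

definition E_set :: "nat \<Rightarrow> (nat \<Rightarrow> nat) set" where
  "E_set d = {x \<in> seqs d. \<exists>i\<in>{0,1}. \<exists>n. \<forall>k\<ge>n. x k = i}"

definition L_star :: "(nat \<Rightarrow> real \<Rightarrow> real) \<Rightarrow> nat \<Rightarrow> real set \<Rightarrow> real set" where
  "L_star f d X = limit_set f d X - coding f X ` E_set d"

end

theory Submission
  imports Defs
begin


definition spread :: "real set \<Rightarrow> real \<Rightarrow> bool" where
  "spread S D \<longleftrightarrow> (\<forall>u\<in>S. \<forall>v\<in>S. \<bar>u - v\<bar> \<le> D)"

lemma combine_lt1:
  assumes "\<forall>a\<le>(d::nat). \<exists>c<1. P a (c::real)"
    and mono: "\<And>a c c'. P a c \<Longrightarrow> c \<le> c' \<Longrightarrow> P a c'"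
  shows "\<exists>c<1. \<forall>a\<le>d. P a c"
  using assms(1)
proof (induction d)
  case 0 then show ?case by auto
next
  case (Suc d)
  then obtain c where c: "c < 1" "\<forall>a\<le>d. P a c" by auto
  obtain c' where c': "c' < 1" "P (Suc d) c'" using Suc.prems by auto
  show ?case
  proof (intro exI[of _ "max c c'"] conjI allI impI)
    show "max c c' < 1" using c c' by auto
    fix a assume "a \<le> Suc d"
    then show "P a (max c c')"
      by (metis c'(2) c(2) le_Suc_eq max.cobounded1 max.cobounded2 mono)
  qed
qed

lemma combine_pos:
  assumes "\<forall>a\<le>(d::nat). \<exists>c>0. P a (c::real)"
    and mono: "\<And>a c c'. P a c \<Longrightarrow> 0 < c' \<Longrightarrow> c' \<le> c \<Longrightarrow> P a c'"
  shows "\<exists>c>0. \<forall>a\<le>d. P a c"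
  using assms(1)
proof (induction d)
  case 0 then show ?case by auto
next
  case (Suc d)
  then obtain c where c: "c > 0" "\<forall>a\<le>d. P a c" by auto
  obtain c' where c': "c' > 0" "P (Suc d) c'" using Suc.prems by auto
  show ?case
  proof (intro exI[of _ "min c c'"] conjI allI impI)
    show "min c c' > 0" using c c' by auto
    fix a assume "a \<le> Suc d"
    then show "P a (min c c')"
      by (metis c'(2) c c' le_Suc_eq min.cobounded1 min.cobounded2 mono min_less_iff_conj)
  qed
qed

lemma cw_Nil[simp]: "comp_word f [] = id"
  by (simp add: comp_word_def)

lemma cw_Cons[simp]: "comp_word f (a # w) = f a \<circ> comp_word f w"
  by (simp add: comp_word_def)

lemma cw_append: "comp_word f (u @ v) = comp_word f u \<circ> comp_word f v"
  by (induction u) auto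

lemma shift_iter: "(shift ^^ k) x i = x (k + i)"
  by (induction k arbitrary: i) (auto simp: shift_def)

lemma shift_iter_seqs: "x \<in> seqs d \<Longrightarrow> (shift ^^ k) x \<in> seqs d"
  by (auto simp: seqs_def shift_iter)

lemma shift_seqs: "x \<in> seqs d \<Longrightarrow> shift x \<in> seqs d"
  by (auto simp: seqs_def shift_def)

lemma map_upt_Suc_shift: "map z [0..<Suc m] = z 0 # map (shift z) [0..<m]"
  by (induction m) (auto simp: shift_def)

lemma map_shift_iter: "map ((shift ^^ j) y) [0..<K] = map y [j..<j+K]"
proof -
  have "map ((shift ^^ j) y) [0..<K] = map (\<lambda>i. y (i + j)) [0..<K]"
    by (auto simp: shift_iter add.commute)
  also have "\<dots> = map y (map (\<lambda>i. i + j) [0..<K])" by simp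
  also have "\<dots> = map y [j..<j+K]" by (simp add: map_add_upt add.commute)
  finally show ?thesis .
qed

lemma map_upt_split: "m \<le> n \<Longrightarrow> map y [0..<n] = map y [0..<m] @ map y [m..<n]"
  by (metis map_append le0 upt_add_eq_append le_add_diff_inverse)




locale ifs =
  fixes d :: nat and X :: "real set" and f :: "nat \<Rightarrow> real \<Rightarrow> real" and l r :: real
  assumes setting: "ifs_setting d X f" and Xeq: "X = {l..r}" and lr: "l < r"
begin

lemma fX_int0: "\<forall>a\<le>d. f a ` X \<subseteq> interior X"
  using setting unfolding ifs_setting_def by (elim conjE) assumption

lemma fX_int: "a \<le> d \<Longrightarrow> f a ` X \<subseteq> {l<..<r}"
  using fX_int0 Xeq by auto

lemma lipF: "\<forall>a\<le>d. \<exists>c<1. \<forall>x\<in>X. \<forall>y\<in>X. \<bar>f a x - f a y\<bar> \<le> c * \<bar>x - y\<bar>"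
  using setting unfolding ifs_setting_def by (elim conjE) assumption

lemma fX: "a \<le> d \<Longrightarrow> x \<in> X \<Longrightarrow> f a x \<in> X"
  using fX_int Xeq by fastforce

lemma lam_ex: "\<exists>c. 1/2 \<le> c \<and> c < 1 \<and> (\<forall>a\<le>d. \<forall>x\<in>X. \<forall>y\<in>X. \<bar>f a x - f a y\<bar> \<le> c * \<bar>x - y\<bar>)"
proof -
  have "\<forall>a\<le>d. \<exists>c<1. \<forall>x\<in>X. \<forall>y\<in>X. \<bar>f a x - f a y\<bar> \<le> c * \<bar>x - y\<bar>"
    by (rule lipF)
  moreover have "\<And>a c c'. \<forall>x\<in>X. \<forall>y\<in>X. \<bar>f a x - f a y\<bar> \<le> c * \<bar>x - y\<bar> \<Longrightarrow> c \<le> c' \<Longrightarrow>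
      \<forall>x\<in>X. \<forall>y\<in>X. \<bar>f a x - f a y\<bar> \<le> c' * \<bar>x - y\<bar>"
  proof (intro ballI)
    fix a c c' x y assume h: "\<forall>x\<in>X. \<forall>y\<in>X. \<bar>f a x - f a y\<bar> \<le> c * \<bar>x - y\<bar>" "c \<le> (c'::real)" "x \<in> X" "y \<in> X"
    have "\<bar>f a x - f a y\<bar> \<le> c * \<bar>x - y\<bar>" using h by blast
    also have "\<dots> \<le> c' * \<bar>x - y\<bar>" using h(2) by (intro mult_right_mono) auto
    finally show "\<bar>f a x - f a y\<bar> \<le> c' * \<bar>x - y\<bar>" .
  qed
  ultimately obtain c where c: "c < 1" "\<forall>a\<le>d. \<forall>x\<in>X. \<forall>y\<in>X. \<bar>f a x - f a y\<bar> \<le> c * \<bar>x - y\<bar>"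
    using combine_lt1[where P="\<lambda>a c. \<forall>x\<in>X. \<forall>y\<in>X. \<bar>f a x - f a y\<bar> \<le> c * \<bar>x - y\<bar>" and d=d]
    by blast
  show ?thesis
  proof (intro exI[of _ "max c (1/2)"] conjI allI impI ballI)
    fix a x y assume "a \<le> d" "x \<in> X" "y \<in> X"
    then have "\<bar>f a x - f a y\<bar> \<le> c * \<bar>x - y\<bar>" using c by auto
    also have "\<dots> \<le> max c (1/2) * \<bar>x - y\<bar>" by (simp add: mult_right_mono)
    finally show "\<bar>f a x - f a y\<bar> \<le> max c (1/2) * \<bar>x - y\<bar>" .
  qed (use c in auto)
qed

definition lam where
  "lam = (SOME c. 1/2 \<le> c \<and> c < 1 \<and> (\<forall>a\<le>d. \<forall>x\<in>X. \<forall>y\<in>X. \<bar>f a x - f a y\<bar> \<le> c * \<bar>x - y\<bar>))"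

lemma lam: "1/2 \<le> lam" "lam < 1" "a \<le> d \<Longrightarrow> x \<in> X \<Longrightarrow> y \<in> X \<Longrightarrow> \<bar>f a x - f a y\<bar> \<le> lam * \<bar>x - y\<bar>"
  using someI_ex[OF lam_ex] unfolding lam_def[symmetric] by auto

lemma lam_pos: "0 < lam" using lam(1) by simp

lemma cw_X: "set w \<subseteq> {..d} \<Longrightarrow> x \<in> X \<Longrightarrow> comp_word f w x \<in> X"
  by (induction w) (auto intro: fX)

lemma cw_lip: "set w \<subseteq> {..d} \<Longrightarrow> x \<in> X \<Longrightarrow> y \<in> X \<Longrightarrow>
    \<bar>comp_word f w x - comp_word f w y\<bar> \<le> lam ^ length w * \<bar>x - y\<bar>"
proof (induction w)
  case Nil then show ?case by simp
next
  case (Cons a w)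
  have "\<bar>comp_word f (a#w) x - comp_word f (a#w) y\<bar> \<le> lam * \<bar>comp_word f w x - comp_word f w y\<bar>"
    using Cons.prems by (auto intro!: lam(3) cw_X)
  also have "\<dots> \<le> lam * (lam ^ length w * \<bar>x - y\<bar>)"
    using Cons lam_pos by (intro mult_left_mono) auto
  finally show ?case by simp
qed

lemma lam_pow_le1: "lam ^ n \<le> 1"
  using lam lam_pos by (simp add: power_le_one)

lemma cw_cont: "set w \<subseteq> {..d} \<Longrightarrow> continuous_on X (comp_word f w)"
  unfolding continuous_on_iff
proof (intro ballI allI impI)
  fix x e assume w: "set w \<subseteq> {..d}" and x: "x \<in> X" and e: "(0::real) < e"
  show "\<exists>d>0. \<forall>x'\<in>X. dist x' x < d \<longrightarrow> dist (comp_word f w x') (comp_word f w x) < e"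
  proof (intro exI[of _ e] conjI ballI impI)
    fix x' assume "x' \<in> X" "dist x' x < e"
    then have "\<bar>comp_word f w x' - comp_word f w x\<bar> \<le> lam ^ length w * \<bar>x' - x\<bar>"
      using cw_lip w x by auto
    also have "\<dots> \<le> \<bar>x' - x\<bar>" by (rule mult_left_le_one_le) (auto simp: lam_pow_le1 lam_pos less_imp_le)
    finally show "dist (comp_word f w x') (comp_word f w x) < e"
      using \<open>dist x' x < e\<close> by (simp add: dist_real_def)
  qed (use e in auto)
qed

lemma cw_compact: "set w \<subseteq> {..d} \<Longrightarrow> compact (comp_word f w ` X)"
  using cw_cont Xeq by (intro compact_continuous_image) auto

lemma cw_spread: "set w \<subseteq> {..d} \<Longrightarrow> Y \<subseteq> X \<Longrightarrow> spread Y D \<Longrightarrow>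
    spread (comp_word f w ` Y) (lam ^ length w * D)"
  unfolding spread_def
proof (intro ballI)
  fix u v assume w: "set w \<subseteq> {..d}" and Y: "Y \<subseteq> X" "\<forall>u\<in>Y. \<forall>v\<in>Y. \<bar>u - v\<bar> \<le> D"
    and u: "u \<in> comp_word f w ` Y" and v: "v \<in> comp_word f w ` Y"
  then obtain x y where xy: "x \<in> Y" "y \<in> Y" "u = comp_word f w x" "v = comp_word f w y" by auto
  have "x \<in> X" "y \<in> X" using xy Y by auto
  then have "\<bar>u - v\<bar> \<le> lam ^ length w * \<bar>x - y\<bar>" using cw_lip[OF w] xy by simp
  also have "\<dots> \<le> lam ^ length w * D" using xy Y lam_pos by (intro mult_left_mono) auto
  finally show "\<bar>u - v\<bar> \<le> lam ^ length w * D" .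
qed

lemma spread_X: "spread X (r - l)"
  using Xeq by (auto simp: spread_def)

lemma words_set: "w \<in> words d n \<Longrightarrow> set w \<subseteq> {..d}"
  by (auto simp: words_def)

lemma seqs_map: "x \<in> seqs d \<Longrightarrow> set (map x [i..<j]) \<subseteq> {..d}"
  by (auto simp: seqs_def)

definition cset where "cset x n = comp_word f (map x [0..<n]) ` X"

lemma cset_mono: "x \<in> seqs d \<Longrightarrow> m \<le> n \<Longrightarrow> cset x n \<subseteq> cset x m"
  unfolding cset_def
  by (auto simp: map_upt_split[of m n] cw_append intro!: imageI cw_X seqs_map)

lemma cset_spread: "x \<in> seqs d \<Longrightarrow> spread (cset x n) (lam ^ n * (r - l))"
proof -
  assume x: "x \<in> seqs d"
  have "spread (comp_word f (map x [0..<n]) ` X) (lam ^ length (map x [0..<n]) * (r-l))"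
    by (rule cw_spread[OF seqs_map[OF x] _ spread_X]) auto
  then show ?thesis by (simp add: cset_def)
qed

lemma cset_ne: "cset x n \<noteq> {}"
  unfolding cset_def using Xeq lr by auto

lemma coding_ex: "x \<in> seqs d \<Longrightarrow> \<exists>a. (\<Inter>n. cset x n) = {a}"
proof -
  assume x: "x \<in> seqs d"
  have "\<exists>a. \<Inter>(range (cset x)) = {a}"
  proof (rule decreasing_closed_nest_sing)
    show "closed (cset x n)" for n
      unfolding cset_def by (intro compact_imp_closed cw_compact seqs_map x)
    show "cset x n \<noteq> {}" for n by (rule cset_ne)
    show "m \<le> n \<Longrightarrow> cset x n \<subseteq> cset x m" for m n by (rule cset_mono[OF x])
    fix e :: real assume e: "e > 0"
    obtain n where n: "lam ^ n < e / (r - l)" using real_arch_pow_inv[of "e/(r-l)" lam] e lr lam by auto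
    then have "lam ^ n * (r - l) < e" using lr by (simp add: field_simps)
    show "\<exists>n. \<forall>u\<in>cset x n. \<forall>v\<in>cset x n. dist u v < e"
    proof (intro exI[of _ n] ballI)
      fix u v assume "u \<in> cset x n" "v \<in> cset x n"
      then have "\<bar>u-v\<bar> \<le> lam^n*(r-l)" using cset_spread[OF x, of n] by (auto simp: spread_def)
      then show "dist u v < e" using \<open>lam ^ n * (r - l) < e\<close> by (simp add: dist_real_def)
    qed
  qed
  then show ?thesis by simp
qed

lemma coding_cset: "x \<in> seqs d \<Longrightarrow> coding f X x \<in> cset x n"
proof -
  assume x: "x \<in> seqs d"
  obtain a where a: "(\<Inter>n. cset x n) = {a}" using coding_ex[OF x] by auto
  have "coding f X x = a"
    unfolding coding_def
  proof (rule the_equality)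
    show "\<forall>n. a \<in> comp_word f (map x [0..<n]) ` X" using a by (auto simp: cset_def)
    fix y assume "\<forall>n. y \<in> comp_word f (map x [0..<n]) ` X"
    then have "y \<in> (\<Inter>n. cset x n)" by (auto simp: cset_def)
    then show "y = a" using a by auto
  qed
  then show ?thesis using a by auto
qed

lemma coding_unique: "x \<in> seqs d \<Longrightarrow> (\<And>n. y \<in> cset x n) \<Longrightarrow> coding f X x = y"
proof -
  assume x: "x \<in> seqs d" and y: "\<And>n. y \<in> cset x n"
  obtain a where a: "(\<Inter>n. cset x n) = {a}" using coding_ex[OF x] by auto
  have "y = a" "coding f X x = a" using a y coding_cset[OF x] by blast+
  then show ?thesis by simp
qed

lemma coding_shift: "x \<in> seqs d \<Longrightarrow> coding f X x = f (x 0) (coding f X (shift x))"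
proof -
  assume x: "x \<in> seqs d"
  have sx: "shift x \<in> seqs d" using x by (rule shift_seqs)
  have x0: "x 0 \<le> d" using x by (auto simp: seqs_def)
  show ?thesis
  proof (rule coding_unique[OF x])
    fix n show "f (x 0) (coding f X (shift x)) \<in> cset x n"
    proof (cases n)
      case 0
      have "coding f X (shift x) \<in> X" using coding_cset[OF sx, of 0] by (simp add: cset_def)
      then show ?thesis using 0 fX[OF x0] by (simp add: cset_def)
    next
      case (Suc m)
      have "coding f X (shift x) \<in> cset (shift x) m" by (rule coding_cset[OF sx])
      then have "f (x 0) (coding f X (shift x)) \<in> f (x 0) ` cset (shift x) m" by (rule imageI)
      then show ?thesis unfolding Suc cset_def map_upt_Suc_shift cw_Cons image_comp[symmetric] .
    qed
  qed
qed

lemma coding_int: "x \<in> seqs d \<Longrightarrow> coding f X x \<in> {l<..<r}"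
proof -
  assume x: "x \<in> seqs d"
  have "coding f X (shift x) \<in> X" using coding_cset[OF shift_seqs[OF x], of 0] by (simp add: cset_def)
  then show ?thesis using coding_shift[OF x] fX_int[of "x 0"] x by (auto simp: seqs_def)
qed

lemma coding_X: "x \<in> seqs d \<Longrightarrow> coding f X x \<in> X"
proof -
  assume "x \<in> seqs d"
  then have "coding f X x \<in> {l<..<r}" by (rule coding_int)
  then show ?thesis using Xeq by auto
qed

lemma coding_iter: "z \<in> seqs d \<Longrightarrow>
   coding f X z = comp_word f (map z [0..<m]) (coding f X ((shift ^^ m) z))"
proof (induction m arbitrary: z)
  case 0 then show ?case by simp
next
  case (Suc m)
  have "coding f X z = f (z 0) (coding f X (shift z))" using coding_shift[OF Suc.prems] .
  also have "coding f X (shift z) = comp_word f (map (shift z) [0..<m]) (coding f X ((shift ^^ m) (shift z)))"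
    using Suc.IH shift_seqs[OF Suc.prems] by blast
  finally show ?case by (simp add: map_upt_Suc_shift funpow_swap1 del: upt_Suc)
qed

end



lemma holder_small:
  fixes C e0 e :: real
  assumes "0 < e0" "0 < e"
  shows "\<exists>\<delta>>0. \<forall>z. 0 \<le> z \<longrightarrow> z \<le> \<delta> \<longrightarrow> C * z powr e0 \<le> e"
proof (intro exI[of _ "(e/(\<bar>C\<bar>+1)) powr (1/e0)"] conjI allI impI)
  show "0 < (e/(\<bar>C\<bar>+1)) powr (1/e0)" using assms by simp
  fix z :: real assume z: "0 \<le> z" "z \<le> (e/(\<bar>C\<bar>+1)) powr (1/e0)"
  have "z powr e0 \<le> ((e/(\<bar>C\<bar>+1)) powr (1/e0)) powr e0"
    using z assms by (intro powr_mono2) auto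
  also have "\<dots> = e/(\<bar>C\<bar>+1)" using assms by (simp add: powr_powr)
  finally have zz: "z powr e0 \<le> e/(\<bar>C\<bar>+1)" .
  have "C * z powr e0 \<le> \<bar>C\<bar> * z powr e0" by (simp add: mult_right_mono)
  also have "\<dots> \<le> \<bar>C\<bar> * (e/(\<bar>C\<bar>+1))" using zz by (intro mult_left_mono) auto
  also have "\<dots> \<le> e" using assms by (simp add: field_simps)
  finally show "C * z powr e0 \<le> e" .
qed

context ifs
begin

lemma holderF: "\<exists>p q \<epsilon>. p < q \<and> X \<subseteq> {p<..<q} \<and> 0 < \<epsilon> \<and> \<epsilon> \<le> 1 \<and>
        (\<forall>a\<le>d. \<exists>g. (\<forall>x\<in>X. g x = f a x) \<and> g ` {p<..<q} \<subseteq> {p<..<q} \<and>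
            inj_on g {p<..<q} \<and>
            (\<forall>y\<in>{p<..<q}. g differentiable (at y) \<and> deriv g y \<noteq> 0) \<and>
            (\<exists>C. \<forall>x\<in>{p<..<q}. \<forall>y\<in>{p<..<q}.
                 \<bar>deriv g x - deriv g y\<bar> \<le> C * \<bar>x - y\<bar> powr \<epsilon>))"
  using setting unfolding ifs_setting_def by (elim conjE) assumption

lemma deriv_facts:
  assumes a: "a \<le> d"
  shows "\<exists>m>0. \<exists>C e0. 0 < e0 \<and>
     (\<forall>t\<in>{l<..<r}. (f a has_real_derivative deriv (f a) t) (at t) \<and> m \<le> \<bar>deriv (f a) t\<bar>) \<and>
     (\<forall>s\<in>{l<..<r}. \<forall>t\<in>{l<..<r}. \<bar>deriv (f a) s - deriv (f a) t\<bar> \<le> C * \<bar>s - t\<bar> powr e0)"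
proof -
  obtain p q e0 where H: "p < q \<and> X \<subseteq> {p<..<q} \<and> 0 < e0 \<and> e0 \<le> 1 \<and> (\<forall>a\<le>d. \<exists>g. (\<forall>x\<in>X. g x = f a x) \<and> g ` {p<..<q} \<subseteq> {p<..<q} \<and>
            inj_on g {p<..<q} \<and>
            (\<forall>y\<in>{p<..<q}. g differentiable (at y) \<and> deriv g y \<noteq> 0) \<and>
            (\<exists>C. \<forall>x\<in>{p<..<q}. \<forall>y\<in>{p<..<q}.
                 \<bar>deriv g x - deriv g y\<bar> \<le> C * \<bar>x - y\<bar> powr e0))"
    using holderF by blast
  then have pq: "p < q" "X \<subseteq> {p<..<q}" "0 < e0" and
    G: "\<exists>g. (\<forall>x\<in>X. g x = f a x) \<and> g ` {p<..<q} \<subseteq> {p<..<q} \<and>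
            inj_on g {p<..<q} \<and>
            (\<forall>y\<in>{p<..<q}. g differentiable (at y) \<and> deriv g y \<noteq> 0) \<and>
            (\<exists>C. \<forall>x\<in>{p<..<q}. \<forall>y\<in>{p<..<q}.
                 \<bar>deriv g x - deriv g y\<bar> \<le> C * \<bar>x - y\<bar> powr e0)"
    using a by (blast, blast, blast, blast)
  obtain g C where g: "\<forall>x\<in>X. g x = f a x"
     "\<forall>y\<in>{p<..<q}. g differentiable (at y) \<and> deriv g y \<noteq> 0"
     "\<forall>x\<in>{p<..<q}. \<forall>y\<in>{p<..<q}. \<bar>deriv g x - deriv g y\<bar> \<le> C * \<bar>x - y\<bar> powr e0"
    using G by blast
  have lrpq: "{l..r} \<subseteq> {p<..<q}" using pq Xeq by auto
  have eqd: "deriv (f a) t = deriv g t" if t: "t \<in> {l<..<r}" for t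
  proof (rule deriv_cong_ev)
    have "\<forall>\<^sub>F x in nhds t. x \<in> {l<..<r}" by (rule eventually_nhds_in_open) (use t in auto)
    then show "\<forall>\<^sub>F x in nhds t. f a x = g x"
      by (rule eventually_mono) (use g(1) Xeq in auto)
  qed simp
  have hasd: "(f a has_real_derivative deriv (f a) t) (at t)" if t: "t \<in> {l<..<r}" for t
  proof -
    have "t \<in> {l..r}" using t by auto
    then have "t \<in> {p<..<q}" using lrpq by blast
    then have "g differentiable (at t)" using g(2) by blast
    then have "(g has_real_derivative deriv g t) (at t)"
      using DERIV_deriv_iff_real_differentiable by blast
    then have "(f a has_real_derivative deriv g t) (at t)"
      by (rule has_field_derivative_transform_within_open[of _ _ _ "{l<..<r}"])
         (use t g(1) Xeq in auto)
    then show ?thesis using eqd[OF t] by simp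
  qed
  have cont: "continuous_on {l..r} (\<lambda>t. \<bar>deriv g t\<bar>)"
    unfolding continuous_on_iff
  proof (intro ballI allI impI)
    fix x e :: real assume x: "x \<in> {l..r}" and e: "0 < e"
    obtain \<delta> where \<delta>: "\<delta> > 0" "\<forall>z. 0 \<le> z \<longrightarrow> z \<le> \<delta> \<longrightarrow> C * z powr e0 \<le> e/2"
      using holder_small[OF pq(3), of "e/2" C] e by auto
    show "\<exists>d>0. \<forall>x'\<in>{l..r}. dist x' x < d \<longrightarrow> dist \<bar>deriv g x'\<bar> \<bar>deriv g x\<bar> < e"
    proof (intro exI[of _ \<delta>] conjI ballI impI)
      fix x' assume x': "x' \<in> {l..r}" "dist x' x < \<delta>"
      have "x' \<in> {p<..<q}" "x \<in> {p<..<q}" using x x' lrpq by auto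
      then have "\<bar>deriv g x' - deriv g x\<bar> \<le> C * \<bar>x' - x\<bar> powr e0"
        using g(3) by blast
      also have "\<dots> \<le> e/2" using \<delta> x' by (auto simp: dist_real_def)
      finally show "dist \<bar>deriv g x'\<bar> \<bar>deriv g x\<bar> < e" using e abs_triangle_ineq3[of "deriv g x'" "deriv g x"] by (simp add: dist_real_def)
    qed (use \<delta> in auto)
  qed
  obtain t0 where t0: "t0 \<in> {l..r}" "\<forall>t\<in>{l..r}. \<bar>deriv g t0\<bar> \<le> \<bar>deriv g t\<bar>"
    using continuous_attains_inf[OF compact_Icc _ cont] lr by auto
  have "t0 \<in> {p<..<q}" using t0 lrpq by auto
  then have m: "0 < \<bar>deriv g t0\<bar>" using g(2) by auto
  have A: "\<forall>t\<in>{l<..<r}. (f a has_real_derivative deriv (f a) t) (at t) \<and> \<bar>deriv g t0\<bar> \<le> \<bar>deriv (f a) t\<bar>"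
  proof
    fix t assume t: "t \<in> {l<..<r}"
    show "(f a has_real_derivative deriv (f a) t) (at t) \<and> \<bar>deriv g t0\<bar> \<le> \<bar>deriv (f a) t\<bar>"
      using hasd[OF t] t0 t eqd[OF t] by auto
  qed
  have B: "\<forall>s\<in>{l<..<r}. \<forall>t\<in>{l<..<r}. \<bar>deriv (f a) s - deriv (f a) t\<bar> \<le> C * \<bar>s - t\<bar> powr e0"
  proof (intro ballI)
    fix s t assume s: "s \<in> {l<..<r}" and t: "t \<in> {l<..<r}"
    have "s \<in> {l..r}" "t \<in> {l..r}" using s t by auto
    then have "s \<in> {p<..<q}" "t \<in> {p<..<q}" using lrpq by blast+
    then have "\<bar>deriv g s - deriv g t\<bar> \<le> C * \<bar>s - t\<bar> powr e0" using g(3) by blast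
    then show "\<bar>deriv (f a) s - deriv (f a) t\<bar> \<le> C * \<bar>s - t\<bar> powr e0"
      using eqd[OF s] eqd[OF t] by simp
  qed
  show ?thesis using m pq(3) A B by blast
qed

lemma deriv_lower: "\<exists>m>0. \<forall>a\<le>d. \<forall>t\<in>{l<..<r}. m \<le> \<bar>deriv (f a) t\<bar>"
proof (rule combine_pos)
  show "\<forall>a\<le>d. \<exists>m>0. \<forall>t\<in>{l<..<r}. m \<le> \<bar>deriv (f a) t\<bar>"
    using deriv_facts by blast
next
  fix a and c c' :: real assume h: "\<forall>t\<in>{l<..<r}. c \<le> \<bar>deriv (f a) t\<bar>" "0 < c'" "c' \<le> c"
  show "\<forall>t\<in>{l<..<r}. c' \<le> \<bar>deriv (f a) t\<bar>"
  proof
    fix t assume "t \<in> {l<..<r}" then show "c' \<le> \<bar>deriv (f a) t\<bar>" using h(1) h(3) by force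
  qed
qed

lemma f_cont: "a \<le> d \<Longrightarrow> continuous_on X (f a)"
  using cw_cont[of "[a]"] by simp

lemma local_lip_a:
  assumes a: "a \<le> d" and e: "0 < \<epsilon>"
  shows "\<exists>\<delta>>0. \<forall>t\<in>{l<..<r}. \<forall>u\<in>X. \<forall>v\<in>X. \<bar>u - t\<bar> \<le> \<delta> \<longrightarrow> \<bar>v - t\<bar> \<le> \<delta> \<longrightarrow>
            \<bar>f a u - f a v\<bar> \<le> exp \<epsilon> * \<bar>deriv (f a) t\<bar> * \<bar>u - v\<bar>"
proof -
  obtain m C e0 where m: "m > 0" "0 < e0"
    "\<forall>t\<in>{l<..<r}. (f a has_real_derivative deriv (f a) t) (at t) \<and> m \<le> \<bar>deriv (f a) t\<bar>"
    "\<forall>s\<in>{l<..<r}. \<forall>t\<in>{l<..<r}. \<bar>deriv (f a) s - deriv (f a) t\<bar> \<le> C * \<bar>s - t\<bar> powr e0"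
    using deriv_facts[OF a] by blast
  obtain \<delta> where \<delta>: "\<delta> > 0" "\<forall>z. 0 \<le> z \<longrightarrow> z \<le> \<delta> \<longrightarrow> C * z powr e0 \<le> \<epsilon> * m"
    using holder_small[OF m(2), of "\<epsilon> * m" C] e m by auto
  have key: "\<bar>f a u - f a v\<bar> \<le> exp \<epsilon> * \<bar>deriv (f a) t\<bar> * \<bar>u - v\<bar>"
    if t: "t \<in> {l<..<r}" and u: "u \<in> X" and v: "v \<in> X" and uv: "u < v"
      and ut: "\<bar>u - t\<bar> \<le> \<delta>" and vt: "\<bar>v - t\<bar> \<le> \<delta>" for t u v
  proof -
    have sub: "{u..v} \<subseteq> X" using u v Xeq by auto
    have "continuous_on {u..v} (f a)" using f_cont[OF a] sub by (rule continuous_on_subset)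
    moreover have "f a differentiable (at z)" if "u < z" "z < v" for z
    proof -
      have "z \<in> {l<..<r}" using that u v Xeq by auto
      then have "(f a has_real_derivative deriv (f a) z) (at z)" using m(3) by blast
      then show ?thesis using real_differentiable_def by blast
    qed
    ultimately obtain L z where z: "u < z" "z < v" "(f a has_real_derivative L) (at z)"
        "f a v - f a u = (v - u) * L"
      using MVT[OF uv] by blast
    have zi: "z \<in> {l<..<r}" using z u v Xeq by auto
    have L: "L = deriv (f a) z" using z(3) m(3) zi DERIV_unique by blast
    have "\<bar>z - t\<bar> \<le> \<delta>" using z ut vt by auto
    then have "\<bar>L - deriv (f a) t\<bar> \<le> \<epsilon> * m"
      using m(4) zi t \<delta>(2) L by (meson abs_ge_zero order_trans)
    also have "\<dots> \<le> \<epsilon> * \<bar>deriv (f a) t\<bar>" using m(3) t e by (intro mult_left_mono) auto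
    finally have "\<bar>L\<bar> \<le> (1 + \<epsilon>) * \<bar>deriv (f a) t\<bar>" by (simp add: algebra_simps)
    also have "\<dots> \<le> exp \<epsilon> * \<bar>deriv (f a) t\<bar>" by (intro mult_right_mono) auto
    finally have LL: "\<bar>L\<bar> \<le> exp \<epsilon> * \<bar>deriv (f a) t\<bar>" .
    have "f a u - f a v = -((v - u) * L)" using z(4) by simp
    then have "\<bar>f a u - f a v\<bar> = \<bar>u - v\<bar> * \<bar>L\<bar>" by (simp only: abs_minus_cancel abs_mult abs_minus_commute)
    also have "\<dots> \<le> \<bar>u - v\<bar> * (exp \<epsilon> * \<bar>deriv (f a) t\<bar>)" using LL by (intro mult_left_mono) auto
    finally show ?thesis by (simp add: mult_ac)
  qed
  show ?thesis
  proof (intro exI[of _ \<delta>] conjI ballI impI)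
    fix t u v assume t: "t \<in> {l<..<r}" and u: "u \<in> X" and v: "v \<in> X"
      and ut: "\<bar>u - t\<bar> \<le> \<delta>" and vt: "\<bar>v - t\<bar> \<le> \<delta>"
    consider "u < v" | "u = v" | "v < u" by linarith
    then show "\<bar>f a u - f a v\<bar> \<le> exp \<epsilon> * \<bar>deriv (f a) t\<bar> * \<bar>u - v\<bar>"
    proof cases
      case 1 then show ?thesis using key t u v ut vt by blast
    next
      case 2 then show ?thesis by simp
    next
      case 3 then show ?thesis using key[OF t v u 3 vt ut] by (simp add: abs_minus_commute)
    qed
  qed (rule \<delta>(1))
qed

lemma local_lip:
  assumes e: "0 < \<epsilon>"
  shows "\<exists>\<delta>>0. \<forall>a\<le>d. \<forall>t\<in>{l<..<r}. \<forall>u\<in>X. \<forall>v\<in>X. \<bar>u - t\<bar> \<le> \<delta> \<longrightarrow> \<bar>v - t\<bar> \<le> \<delta> \<longrightarrow>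
            \<bar>f a u - f a v\<bar> \<le> exp \<epsilon> * \<bar>deriv (f a) t\<bar> * \<bar>u - v\<bar>"
proof (rule combine_pos)
  show "\<forall>a\<le>d. \<exists>\<delta>>0. \<forall>t\<in>{l<..<r}. \<forall>u\<in>X. \<forall>v\<in>X. \<bar>u - t\<bar> \<le> \<delta> \<longrightarrow> \<bar>v - t\<bar> \<le> \<delta> \<longrightarrow>
            \<bar>f a u - f a v\<bar> \<le> exp \<epsilon> * \<bar>deriv (f a) t\<bar> * \<bar>u - v\<bar>"
    using local_lip_a[OF _ e] by blast
next
  fix a and c c' :: real
  assume h: "\<forall>t\<in>{l<..<r}. \<forall>u\<in>X. \<forall>v\<in>X. \<bar>u - t\<bar> \<le> c \<longrightarrow> \<bar>v - t\<bar> \<le> c \<longrightarrow>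
            \<bar>f a u - f a v\<bar> \<le> exp \<epsilon> * \<bar>deriv (f a) t\<bar> * \<bar>u - v\<bar>" "0 < c'" "c' \<le> c"
  show "\<forall>t\<in>{l<..<r}. \<forall>u\<in>X. \<forall>v\<in>X. \<bar>u - t\<bar> \<le> c' \<longrightarrow> \<bar>v - t\<bar> \<le> c' \<longrightarrow>
            \<bar>f a u - f a v\<bar> \<le> exp \<epsilon> * \<bar>deriv (f a) t\<bar> * \<bar>u - v\<bar>"
  proof (intro ballI impI)
    fix t u v assume tuv: "t \<in> {l<..<r}" "u \<in> X" "v \<in> X" "\<bar>u - t\<bar> \<le> c'" "\<bar>v - t\<bar> \<le> c'"
    then have "\<bar>u - t\<bar> \<le> c" "\<bar>v - t\<bar> \<le> c" using h(3) by linarith+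
    then show "\<bar>f a u - f a v\<bar> \<le> exp \<epsilon> * \<bar>deriv (f a) t\<bar> * \<bar>u - v\<bar>" using h(1) tuv by blast
  qed
qed

end



lemma seqs_compact: "compact (seqs d)"
proof -
  have e: "seqs d = PiE UNIV (\<lambda>_. {..d})" by (auto simp: seqs_def PiE_def extensional_def)
  have "compactin (product_topology (\<lambda>i. euclidean) UNIV) (PiE UNIV (\<lambda>_::nat. {..d::nat}))"
    by (simp add: compactin_PiE finite_imp_compact)
  then show ?thesis unfolding e euclidean_product_topology by simp
qed

lemma open_cylN: "open {y::nat\<Rightarrow>nat. \<forall>i<N. y i = x i}"
proof -
  have e: "{y::nat\<Rightarrow>nat. \<forall>i<N. y i = x i} = PiE UNIV (\<lambda>i. if i<N then {x i} else UNIV)"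
    by (auto simp: PiE_def extensional_def split: if_splits)
  show ?thesis unfolding e
    by (rule open_PiE) (auto simp: discrete_topology_class.open_discrete)
qed

lemma cyl_cont:
  assumes "\<forall>x\<in>seqs d. \<forall>e>0. \<exists>N. \<forall>y\<in>seqs d. (\<forall>i<N. y i = x i) \<longrightarrow> \<bar>h y - h x\<bar> < (e::real)"
  shows "continuous_on (seqs d) h"
  unfolding continuous_on_topological
proof (intro ballI allI impI)
  fix x B assume x: "x \<in> seqs d" and B: "open B" "h x \<in> B"
  obtain e where e: "e > 0" "\<forall>y. dist y (h x) < e \<longrightarrow> y \<in> B" using B unfolding open_dist by blast
  obtain N where N: "\<forall>y\<in>seqs d. (\<forall>i<N. y i = x i) \<longrightarrow> \<bar>h y - h x\<bar> < e" using assms x e by blast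
  show "\<exists>A. open A \<and> x \<in> A \<and> (\<forall>y\<in>seqs d. y \<in> A \<longrightarrow> h y \<in> B)"
  proof (intro exI[of _ "{y. \<forall>i<N. y i = x i}"] conjI ballI impI)
    show "open {y::nat\<Rightarrow>nat. \<forall>i<N. y i = x i}" by (rule open_cylN)
    fix y assume "y \<in> seqs d" "y \<in> {y. \<forall>i<N. y i = x i}"
    then have "\<bar>h y - h x\<bar> < e" using N by auto
    then show "h y \<in> B" using e by (auto simp: dist_real_def)
  qed auto
qed

lemma ln_diff_le:
  fixes m u v :: real
  assumes "0 < m" "m \<le> u" "m \<le> v"
  shows "\<bar>ln u - ln v\<bar> \<le> \<bar>u - v\<bar> / m"
proof -
  have k: "ln a - ln b \<le> \<bar>a - b\<bar> / m" if "m \<le> a" "m \<le> b" for a b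
  proof -
    have "ln a - ln b = ln (a / b)" using that assms by (simp add: ln_div)
    also have "\<dots> \<le> a / b - 1" using that assms by (intro ln_le_minus_one) auto
    also have "\<dots> = (a - b) / b" using that assms by (simp add: field_simps)
    also have "\<dots> \<le> \<bar>a - b\<bar> / b" using that assms by (intro divide_right_mono) auto
    also have "\<dots> \<le> \<bar>a - b\<bar> / m" using that assms by (intro divide_left_mono) auto
    finally show ?thesis .
  qed
  show ?thesis using k[of u v] k[of v u] assms by (auto simp: abs_minus_commute)
qed

context ifs
begin

lemma deriv_nz: "a \<le> d \<Longrightarrow> t \<in> {l<..<r} \<Longrightarrow> deriv (f a) t \<noteq> 0"
  using deriv_lower by fastforce

lemma phi_exp: "z \<in> seqs d \<Longrightarrow> exp (phi f X z) = \<bar>deriv (f (z 0)) (coding f X (shift z))\<bar>"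
proof -
  assume z: "z \<in> seqs d"
  have "deriv (f (z 0)) (coding f X (shift z)) \<noteq> 0"
    using z coding_int[OF shift_seqs[OF z]] by (intro deriv_nz) (auto simp: seqs_def)
  then show ?thesis by (simp add: phi_def)
qed

lemma phi_lower: "\<exists>m>0. \<forall>z\<in>seqs d. ln m \<le> phi f X z"
proof -
  obtain m where m: "m > 0" "\<forall>a\<le>d. \<forall>t\<in>{l<..<r}. m \<le> \<bar>deriv (f a) t\<bar>" using deriv_lower by blast
  show ?thesis
  proof (intro exI[of _ m] conjI ballI)
    fix z assume z: "z \<in> seqs d"
    have "m \<le> \<bar>deriv (f (z 0)) (coding f X (shift z))\<bar>"
      using m(2) z coding_int[OF shift_seqs[OF z]] by (auto simp: seqs_def)
    then show "ln m \<le> phi f X z" using m(1) by (simp add: phi_def)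
  qed (rule m(1))
qed

lemma cset_cong: "(\<forall>i<n. y i = x i) \<Longrightarrow> cset y n = cset x n"
  unfolding cset_def by (metis (mono_tags, lifting) atLeastLessThan_iff map_eq_conv set_upt)

lemma coding_close:
  assumes x: "x \<in> seqs d" and y: "y \<in> seqs d" and agree: "\<forall>i<n. y i = x i"
  shows "\<bar>coding f X y - coding f X x\<bar> \<le> lam ^ n * (r - l)"
proof -
  have "coding f X y \<in> cset x n" using coding_cset[OF y, of n] cset_cong[OF agree] by simp
  then show ?thesis using coding_cset[OF x, of n] cset_spread[OF x, of n] unfolding spread_def by blast
qed

lemma lam_small: "0 < e \<Longrightarrow> \<exists>N. lam ^ N * (r - l) < e"
proof -
  assume e: "0 < e"
  obtain N where "lam ^ N < e / (r - l)" using real_arch_pow_inv[of "e/(r-l)" lam] e lr lam by auto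
  then show ?thesis using lr by (auto simp: field_simps intro!: exI[of _ N])
qed

lemma phi_cont: "continuous_on (seqs d) (phi f X)"
proof (rule cyl_cont, intro ballI allI impI)
  fix x and e :: real assume x: "x \<in> seqs d" and e: "0 < e"
  define a where "a = x 0"
  have a: "a \<le> d" using x by (auto simp: seqs_def a_def)
  obtain m C e0 where m: "m > 0" "0 < e0"
    "\<forall>t\<in>{l<..<r}. (f a has_real_derivative deriv (f a) t) (at t) \<and> m \<le> \<bar>deriv (f a) t\<bar>"
    "\<forall>s\<in>{l<..<r}. \<forall>t\<in>{l<..<r}. \<bar>deriv (f a) s - deriv (f a) t\<bar> \<le> C * \<bar>s - t\<bar> powr e0"
    using deriv_facts[OF a] by blast
  obtain \<delta> where \<delta>: "\<delta> > 0" "\<forall>z. 0 \<le> z \<longrightarrow> z \<le> \<delta> \<longrightarrow> C * z powr e0 \<le> e * m / 2"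
    using holder_small[OF m(2), of "e * m / 2" C] e m by auto
  obtain N where N: "lam ^ N * (r - l) < \<delta>" using lam_small \<delta> by blast
  show "\<exists>N. \<forall>y\<in>seqs d. (\<forall>i<N. y i = x i) \<longrightarrow> \<bar>phi f X y - phi f X x\<bar> < e"
  proof (intro exI[of _ "Suc N"] ballI impI)
    fix y assume y: "y \<in> seqs d" and ag: "\<forall>i<Suc N. y i = x i"
    have y0: "y 0 = a" using ag a_def by auto
    have ag': "\<forall>i<N. shift y i = shift x i" using ag by (auto simp: shift_def)
    define s where "s = coding f X (shift y)"
    define t where "t = coding f X (shift x)"
    have s: "s \<in> {l<..<r}" using coding_int[OF shift_seqs[OF y]] s_def by simp
    have t: "t \<in> {l<..<r}" using coding_int[OF shift_seqs[OF x]] t_def by simp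
    have st: "\<bar>s - t\<bar> \<le> lam ^ N * (r - l)"
      unfolding s_def t_def by (rule coding_close[OF shift_seqs[OF x] shift_seqs[OF y] ag'])
    have "\<bar>deriv (f a) s - deriv (f a) t\<bar> \<le> C * \<bar>s - t\<bar> powr e0" using m(4) s t by blast
    also have "\<dots> \<le> e * m / 2" using \<delta>(2) st N by auto
    finally have dd: "\<bar>deriv (f a) s - deriv (f a) t\<bar> \<le> e * m / 2" .
    have "\<bar>ln \<bar>deriv (f a) s\<bar> - ln \<bar>deriv (f a) t\<bar>\<bar> \<le> \<bar>\<bar>deriv (f a) s\<bar> - \<bar>deriv (f a) t\<bar>\<bar> / m"
      using m(1) m(3) s t by (intro ln_diff_le) auto
    also have "\<dots> \<le> \<bar>deriv (f a) s - deriv (f a) t\<bar> / m"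
      using m(1) abs_triangle_ineq3 by (intro divide_right_mono) auto
    also have "\<dots> \<le> (e * m / 2) / m" using dd m(1) by (intro divide_right_mono) auto
    also have "\<dots> < e" using m(1) e by simp
    finally show "\<bar>phi f X y - phi f X x\<bar> < e"
      unfolding phi_def y0 a_def[symmetric] s_def[symmetric] t_def[symmetric] .
  qed
qed

lemma holder_cont: "holder_seq d \<psi> \<Longrightarrow> continuous_on (seqs d) \<psi>"
proof (rule cyl_cont, intro ballI allI impI)
  fix x and e :: real assume h: "holder_seq d \<psi>" and x: "x \<in> seqs d" and e: "0 < e"
  obtain C \<theta> where C: "0 < \<theta>" "\<theta> < 1"
    "\<forall>x\<in>seqs d. \<forall>y\<in>seqs d. \<forall>n. (\<forall>i<n. x i = y i) \<longrightarrow> \<bar>\<psi> x - \<psi> y\<bar> \<le> C * \<theta> ^ n"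
    using h unfolding holder_seq_def by blast
  obtain N where N: "C * \<theta> ^ N < e"
  proof (cases "C \<le> 0")
    case True
    then have "C * \<theta> ^ 0 < e" using e by simp
    then show ?thesis using that by blast
  next
    case False
    obtain N where "\<theta> ^ N < e / C" using real_arch_pow_inv[of "e/C" \<theta>] e False C by auto
    then have "C * \<theta> ^ N < e" using False by (simp add: field_simps)
    then show ?thesis using that by blast
  qed
  show "\<exists>N. \<forall>y\<in>seqs d. (\<forall>i<N. y i = x i) \<longrightarrow> \<bar>\<psi> y - \<psi> x\<bar> < e"
  proof (intro exI[of _ N] ballI impI)
    fix y assume "y \<in> seqs d" "\<forall>i<N. y i = x i"
    then have "\<bar>\<psi> y - \<psi> x\<bar> \<le> C * \<theta> ^ N" using C(3) x by blast
    then show "\<bar>\<psi> y - \<psi> x\<bar> < e" using N by simp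
  qed
qed

lemma gap:
  assumes hol: "holder_seq d \<psi>" and above: "\<forall>x\<in>seqs d. \<psi> x > \<alpha> * phi f X x"
  shows "\<exists>\<gamma>>0. \<forall>z\<in>seqs d. \<gamma> \<le> \<psi> z - \<alpha> * phi f X z"
proof -
  have c: "continuous_on (seqs d) (\<lambda>z. \<psi> z - \<alpha> * phi f X z)"
    by (intro continuous_on_diff continuous_on_mult continuous_on_const holder_cont[OF hol] phi_cont)
  have ne: "seqs d \<noteq> {}" by (auto simp: seqs_def intro!: exI[of _ "\<lambda>_. 0"])
  obtain z0 where z0: "z0 \<in> seqs d" "\<forall>z\<in>seqs d. \<psi> z0 - \<alpha> * phi f X z0 \<le> \<psi> z - \<alpha> * phi f X z"
    using continuous_attains_inf[OF seqs_compact ne c] by blast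
  show ?thesis using z0 above by (intro exI[of _ "\<psi> z0 - \<alpha> * phi f X z0"]) auto
qed

end



context ifs
begin

lemma spread_iter:
  assumes \<delta>: "\<forall>a\<le>d. \<forall>t\<in>{l<..<r}. \<forall>u\<in>X. \<forall>v\<in>X. \<bar>u - t\<bar> \<le> \<delta> \<longrightarrow> \<bar>v - t\<bar> \<le> \<delta> \<longrightarrow>
            \<bar>f a u - f a v\<bar> \<le> exp \<epsilon> * \<bar>deriv (f a) t\<bar> * \<bar>u - v\<bar>"
  shows "y \<in> seqs d \<Longrightarrow> Y \<subseteq> X \<Longrightarrow> spread Y D \<Longrightarrow> D \<le> \<delta> \<Longrightarrow> coding f X ((shift ^^ m) y) \<in> Y \<Longrightarrow>
    spread (comp_word f (map y [0..<m]) ` Y) (D * exp (\<Sum>k<m. phi f X ((shift ^^ k) y) + \<epsilon>))"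
proof (induction m arbitrary: y)
  case 0 then show ?case by simp
next
  case (Suc m)
  define y' where "y' = shift y"
  have y': "y' \<in> seqs d" using shift_seqs[OF Suc.prems(1)] y'_def by simp
  have D0: "0 \<le> D" using Suc.prems(3,5) unfolding spread_def by force
  have it: "(shift ^^ m) y' = (shift ^^ Suc m) y" unfolding y'_def by (simp add: funpow_swap1)
  define S where "S = comp_word f (map y' [0..<m]) ` Y"
  define E' where "E' = exp (\<Sum>k<m. phi f X ((shift ^^ k) y') + \<epsilon>)"
  have IH: "spread S (D * E')"
    unfolding S_def E'_def using Suc.IH[OF y' Suc.prems(2,3,4)] Suc.prems(5) it by simp
  have SX: "S \<subseteq> X" unfolding S_def using Suc.prems(2) cw_X[OF seqs_map[OF y']] by blast
  have SD: "spread S D"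
  proof -
    have "spread S (lam ^ length (map y' [0..<m]) * D)"
      unfolding S_def by (rule cw_spread[OF seqs_map[OF y'] Suc.prems(2,3)])
    moreover have "lam ^ length (map y' [0..<m]) * D \<le> D"
      using D0 lam_pow_le1 by (simp add: mult_left_le_one_le lam_pos less_imp_le)
    ultimately show ?thesis unfolding spread_def by force
  qed
  define t where "t = coding f X y'"
  have tS: "t \<in> S"
    unfolding t_def S_def using coding_iter[OF y', of m] Suc.prems(5) it by simp
  have ti: "t \<in> {l<..<r}" unfolding t_def by (rule coding_int[OF y'])
  have a: "y 0 \<le> d" using Suc.prems(1) by (auto simp: seqs_def)
  have ephi: "exp (phi f X y) = \<bar>deriv (f (y 0)) t\<bar>"
    unfolding t_def y'_def by (rule phi_exp[OF Suc.prems(1)])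
  have img: "comp_word f (map y [0..<Suc m]) ` Y = f (y 0) ` S"
    unfolding S_def y'_def map_upt_Suc_shift cw_Cons image_comp ..
  have sum: "(\<Sum>k<Suc m. phi f X ((shift ^^ k) y) + \<epsilon>) = (phi f X y + \<epsilon>) + (\<Sum>k<m. phi f X ((shift ^^ k) y') + \<epsilon>)"
    unfolding sum.lessThan_Suc_shift y'_def by (simp add: funpow_swap1)
  show ?case
    unfolding img spread_def
  proof (intro ballI)
    fix u' v' assume "u' \<in> f (y 0) ` S" "v' \<in> f (y 0) ` S"
    then obtain u v where uv: "u \<in> S" "v \<in> S" "u' = f (y 0) u" "v' = f (y 0) v" by auto
    have "\<bar>u - t\<bar> \<le> \<delta>" "\<bar>v - t\<bar> \<le> \<delta>" using SD uv tS Suc.prems(4) unfolding spread_def by force+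
    then have "\<bar>u' - v'\<bar> \<le> exp \<epsilon> * \<bar>deriv (f (y 0)) t\<bar> * \<bar>u - v\<bar>"
      using \<delta> a ti uv SX by blast
    also have "\<dots> \<le> exp \<epsilon> * \<bar>deriv (f (y 0)) t\<bar> * (D * E')"
      using IH uv unfolding spread_def by (intro mult_left_mono) auto
    also have "\<dots> = D * exp (\<Sum>k<Suc m. phi f X ((shift ^^ k) y) + \<epsilon>)"
      unfolding sum E'_def ephi[symmetric] by (simp add: exp_add mult_ac)
    finally show "\<bar>u' - v'\<bar> \<le> D * exp (\<Sum>k<Suc m. phi f X ((shift ^^ k) y) + \<epsilon>)" .
  qed
qed

end



context ifs
begin

lemma map_cyl: "z \<in> cyl d w \<Longrightarrow> map z [0..<length w] = w"
  by (rule nth_equalityI) (auto simp: cyl_def)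

lemma main:
  fixes \<psi> :: "(nat \<Rightarrow> nat) \<Rightarrow> real" and \<nu> :: "real measure"
  assumes hol: "holder_seq d \<psi>" and above: "\<forall>x\<in>seqs d. \<psi> x > \<alpha> * phi f X x"
    and gibbs: "gibbs_measure d X f \<psi> \<nu>" and ap: "\<alpha> > 0" and xi: "\<xi> \<in> limit_set f d X"
    and d0: "\<delta>0 > 0"
  shows "\<exists>\<eta>. \<eta> \<noteq> \<xi> \<and> dist \<eta> \<xi> < \<delta>0 \<and>
     M \<le> \<bar>distr_fun \<nu> \<xi> - distr_fun \<nu> \<eta>\<bar> / \<bar>\<xi> - \<eta>\<bar> powr \<alpha>"
proof -
  have sets\<nu>: "sets \<nu> = sets borel" and ps: "prob_space \<nu>" and
    Gb: "\<exists>C\<ge>1. \<forall>n. \<forall>w\<in>words d n. \<forall>x\<in>cyl d w.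
        exp (birkhoff n \<psi> x) / C \<le> measure \<nu> (coding f X ` cyl d w) \<and>
        measure \<nu> (coding f X ` cyl d w) \<le> C * exp (birkhoff n \<psi> x)"
    using gibbs unfolding gibbs_measure_def by blast+
  interpret prob_space \<nu> by (rule ps)
  have meas: "A \<in> sets borel \<Longrightarrow> A \<in> sets \<nu>" for A using sets\<nu> by simp
  obtain C where C: "C \<ge> 1" "\<forall>n. \<forall>w\<in>words d n. \<forall>x\<in>cyl d w.
        exp (birkhoff n \<psi> x) / C \<le> measure \<nu> (coding f X ` cyl d w)"
    using Gb by blast
  obtain \<gamma> where \<gamma>: "\<gamma> > 0" "\<forall>z\<in>seqs d. \<gamma> \<le> \<psi> z - \<alpha> * phi f X z"
    using gap[OF hol above] by blast
  define \<epsilon> where "\<epsilon> = \<gamma> / (2 * \<alpha>)"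
  have \<epsilon>: "\<epsilon> > 0" using \<gamma> ap by (simp add: \<epsilon>_def)
  have a\<epsilon>: "\<alpha> * \<epsilon> = \<gamma> / 2" using ap by (simp add: \<epsilon>_def)
  obtain \<delta> where \<delta>: "\<delta> > 0" "\<forall>a\<le>d. \<forall>t\<in>{l<..<r}. \<forall>u\<in>X. \<forall>v\<in>X. \<bar>u - t\<bar> \<le> \<delta> \<longrightarrow> \<bar>v - t\<bar> \<le> \<delta> \<longrightarrow>
            \<bar>f a u - f a v\<bar> \<le> exp \<epsilon> * \<bar>deriv (f a) t\<bar> * \<bar>u - v\<bar>"
    using local_lip[OF \<epsilon>] by blast
  obtain m0 where m0: "m0 > 0" "\<forall>z\<in>seqs d. ln m0 \<le> phi f X z" using phi_lower by blast
  obtain K where K: "lam ^ K * (r - l) < \<delta>" using lam_small \<delta> by blast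
  define \<delta>' where "\<delta>' = lam ^ K * (r - l)"
  have \<delta>'0: "\<delta>' > 0" unfolding \<delta>'_def using lam_pos lr by simp
  define c0 where "c0 = ln C + ln 2 + \<alpha> * (ln 2 + ln \<delta>' - real K * ln m0)"
  obtain n1 where n1: "lam ^ n1 * (r - l) < \<delta>0 / 2" using lam_small d0 by (metis half_gt_zero)
  obtain n2 where n2: "c0 + ln (max M 1) < real n2 * (\<gamma> / 2)"
  proof -
    have "\<gamma>/2 > 0" using \<gamma> by simp
    from reals_Archimedean3[OF this] show ?thesis using that by blast
  qed
  define n where "n = max K (max n1 n2)"
  have Kn: "K \<le> n" "n1 \<le> n" "n2 \<le> n" unfolding n_def by auto
  have lamn: "lam ^ n * (r - l) < \<delta>0 / 2"
  proof -
    have "lam ^ n \<le> lam ^ n1" using Kn lam lam_pos by (intro power_decreasing) auto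
    then have "lam ^ n * (r - l) \<le> lam ^ n1 * (r - l)" using lr by (intro mult_right_mono) auto
    then show ?thesis using n1 by linarith
  qed
  have nbig: "c0 + ln (max M 1) < real n * (\<gamma> / 2)"
  proof -
    have "real n2 * (\<gamma> / 2) \<le> real n * (\<gamma> / 2)" using Kn \<gamma> by (intro mult_right_mono) auto
    then show ?thesis using n2 by linarith
  qed
  obtain w where w: "w \<in> words d n" "\<xi> \<in> comp_word f w ` X"
    using xi unfolding limit_set_def by blast
  have lw: "length w = n" and sw: "set w \<subseteq> {..d}" using w by (auto simp: words_def)
  define y where "y = (\<lambda>i. if i < n then w ! i else 0)"
  have y: "y \<in> seqs d"
    using sw lw by (auto simp: seqs_def y_def dest!: nth_mem)
  have ycyl: "y \<in> cyl d w" using y lw by (auto simp: cyl_def y_def)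
  have mapy: "map y [0..<n] = w" using map_cyl[OF ycyl] lw by simp
  define J where "J = comp_word f w ` X"
  have Jc: "compact J" unfolding J_def by (rule cw_compact[OF sw])
  have xiJ: "\<xi> \<in> J" using w J_def by simp
  have Jsets: "J \<in> sets \<nu>" using Jc by (intro meas borel_closed compact_imp_closed)
  have cylJ: "coding f X ` cyl d w \<subseteq> J"
  proof
    fix u assume "u \<in> coding f X ` cyl d w"
    then obtain z where z: "z \<in> cyl d w" "u = coding f X z" by auto
    have zs: "z \<in> seqs d" using z by (auto simp: cyl_def)
    have "u \<in> cset z n" using coding_cset[OF zs] z by simp
    then show "u \<in> J" using map_cyl[OF z(1)] lw unfolding cset_def J_def by simp
  qed
  have JT: "spread J (lam ^ n * (r - l))"
    using cset_spread[OF y, of n] mapy unfolding cset_def J_def by simp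
  define B where "B = \<delta>' * exp (\<Sum>k<n-K. phi f X ((shift ^^ k) y) + \<epsilon>)"
  have B0: "B > 0" unfolding B_def using \<delta>'0 by simp
  have JB: "spread J B"
  proof -
    define Y where "Y = comp_word f (map y [n-K..<n]) ` X"
    have JY: "J = comp_word f (map y [0..<n-K]) ` Y"
      unfolding J_def Y_def mapy[symmetric] map_upt_split[of "n-K" n y, OF diff_le_self]
        cw_append image_comp ..
    have YX: "Y \<subseteq> X" unfolding Y_def using cw_X[OF seqs_map[OF y]] by blast
    have "spread Y (lam ^ length (map y [n-K..<n]) * (r - l))"
      unfolding Y_def by (rule cw_spread[OF seqs_map[OF y] _ spread_X]) auto
    then have Ys: "spread Y \<delta>'" using Kn unfolding \<delta>'_def by simp
    have cY: "coding f X ((shift ^^ (n-K)) y) \<in> Y"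
    proof -
      have z: "(shift ^^ (n-K)) y \<in> seqs d" by (rule shift_iter_seqs[OF y])
      have "coding f X ((shift ^^ (n-K)) y) =
        comp_word f (map ((shift ^^ (n-K)) y) [0..<K]) (coding f X ((shift ^^ K) ((shift ^^ (n-K)) y)))"
        by (rule coding_iter[OF z])
      also have "map ((shift ^^ (n-K)) y) [0..<K] = map y [n-K..<n]"
        unfolding map_shift_iter using Kn by simp
      finally show ?thesis unfolding Y_def using coding_X[OF shift_iter_seqs[OF z]] by simp
    qed
    show ?thesis unfolding JY B_def
      by (rule spread_iter[OF \<delta>(2) y YX Ys _ cY]) (use K in \<open>simp add: \<delta>'_def\<close>)
  qed
  have SB: "(\<Sum>k<n-K. phi f X ((shift ^^ k) y) + \<epsilon>) \<le> birkhoff n (phi f X) y - real K * ln m0 + real n * \<epsilon>"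
  proof -
    have "(\<Sum>k<n-K. phi f X ((shift ^^ k) y) + \<epsilon>) = (\<Sum>k<n-K. phi f X ((shift ^^ k) y)) + real (n-K) * \<epsilon>"
      by (simp add: sum.distrib)
    moreover have "birkhoff n (phi f X) y = (\<Sum>k<n-K. phi f X ((shift ^^ k) y)) + (\<Sum>k\<in>{n-K..<n}. phi f X ((shift ^^ k) y))"
      unfolding birkhoff_def lessThan_atLeast0 using Kn by (simp add: sum.atLeastLessThan_concat)
    moreover have "real K * ln m0 \<le> (\<Sum>k\<in>{n-K..<n}. phi f X ((shift ^^ k) y))"
    proof -
      have "real (card {n-K..<n}) * ln m0 \<le> (\<Sum>k\<in>{n-K..<n}. phi f X ((shift ^^ k) y))"
        by (rule sum_bounded_below) (use m0 shift_iter_seqs[OF y] in blast)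
      then show ?thesis using Kn by simp
    qed
    moreover have "real (n-K) * \<epsilon> \<le> real n * \<epsilon>" using \<epsilon> by (intro mult_right_mono) auto
    ultimately show ?thesis by linarith
  qed
  have BG: "real n * \<gamma> \<le> birkhoff n \<psi> y - \<alpha> * birkhoff n (phi f X) y"
  proof -
    have "birkhoff n \<psi> y - \<alpha> * birkhoff n (phi f X) y = (\<Sum>k<n. \<psi> ((shift ^^ k) y) - \<alpha> * phi f X ((shift ^^ k) y))"
      unfolding birkhoff_def by (simp add: sum_subtractf sum_distrib_left)
    moreover have "real (card {..<n}) * \<gamma> \<le> (\<Sum>k<n. \<psi> ((shift ^^ k) y) - \<alpha> * phi f X ((shift ^^ k) y))"
      by (rule sum_bounded_below) (use \<gamma> shift_iter_seqs[OF y] in blast)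
    ultimately show ?thesis by simp
  qed
  define P where "P = measure \<nu> J"
  have PG: "exp (birkhoff n \<psi> y) / C \<le> P"
  proof -
    have "exp (birkhoff n \<psi> y) / C \<le> measure \<nu> (coding f X ` cyl d w)" using C w(1) ycyl by blast
    also have "\<dots> \<le> P" unfolding P_def by (rule finite_measure_mono[OF cylJ Jsets])
    finally show ?thesis .
  qed
  have P0: "P > 0" using PG C(1) by (smt (verit) divide_pos_pos exp_gt_zero)
  have bddJ: "bdd_below J" "bdd_above J" using compact_imp_bounded[OF Jc] by (auto intro: bounded_imp_bdd_below bounded_imp_bdd_above)
  have Jne: "J \<noteq> {}" using xiJ by auto
  define a where "a = Inf J"
  define b where "b = Sup J"
  have aJ: "a \<in> J" unfolding a_def by (rule closed_contains_Inf[OF Jne bddJ(1) compact_imp_closed[OF Jc]])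
  have bJ: "b \<in> J" unfolding b_def by (rule closed_contains_Sup[OF Jne bddJ(2) compact_imp_closed[OF Jc]])
  have Jab: "J \<subseteq> {a..b}" unfolding a_def b_def using bddJ by (auto intro: cInf_lower cSup_upper)
  define s where "s = min B (lam ^ n * (r - l))"
  have s0: "s > 0" unfolding s_def using B0 lam_pos lr by simp
  have bas: "b - a \<le> s" using JB JT aJ bJ unfolding spread_def s_def by fastforce
  have axb: "a \<le> \<xi>" "\<xi> \<le> b" using xiJ Jab by auto
  have Psplit: "P \<le> measure \<nu> {a..\<xi>} + measure \<nu> {\<xi><..b}"
  proof -
    have "P \<le> measure \<nu> ({a..\<xi>} \<union> {\<xi><..b})" unfolding P_def
      using Jab by (intro finite_measure_mono) (auto intro: meas)
    also have "\<dots> \<le> measure \<nu> {a..\<xi>} + measure \<nu> {\<xi><..b}" by (intro measure_Un_le meas) auto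
    finally show ?thesis .
  qed
  have Fdiff: "distr_fun \<nu> v - distr_fun \<nu> u = measure \<nu> {u<..v}" if "u \<le> v" for u v
  proof -
    have "{..v} - {..u} = {u<..v}" using that by auto
    then have "measure \<nu> {u<..v} = measure \<nu> {..v} - measure \<nu> {..u}"
      using that by (metis finite_measure_Diff meas atMost_borel atMost_subset_iff)
    then show ?thesis by (simp add: distr_fun_def)
  qed
  obtain \<eta> where \<eta>: "\<eta> \<noteq> \<xi>" "\<bar>\<xi> - \<eta>\<bar> \<le> 2 * s" "P / 2 \<le> \<bar>distr_fun \<nu> \<xi> - distr_fun \<nu> \<eta>\<bar>"
  proof (cases "P / 2 \<le> measure \<nu> {\<xi><..b}")
    case True
    have "\<xi> < b"
    proof (rule ccontr)
      assume "\<not> \<xi> < b"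
      then have "{\<xi><..b} = {}" by auto
      then show False using True P0 by simp
    qed
    moreover have "\<bar>distr_fun \<nu> \<xi> - distr_fun \<nu> b\<bar> = measure \<nu> {\<xi><..b}"
    proof -
      have "distr_fun \<nu> b - distr_fun \<nu> \<xi> = measure \<nu> {\<xi><..b}" using Fdiff axb by simp
      then show ?thesis by (metis abs_minus_commute abs_of_nonneg measure_nonneg)
    qed
    ultimately show ?thesis using that[of b] True bas axb s0 by auto
  next
    case False
    then have L: "P / 2 \<le> measure \<nu> {a..\<xi>}" using Psplit by linarith
    have "measure \<nu> {a..\<xi>} \<le> measure \<nu> {a - s<..\<xi>}"
      using s0 by (intro finite_measure_mono meas) auto
    moreover have "\<bar>distr_fun \<nu> \<xi> - distr_fun \<nu> (a - s)\<bar> = measure \<nu> {a - s<..\<xi>}"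
    proof -
      have "distr_fun \<nu> \<xi> - distr_fun \<nu> (a - s) = measure \<nu> {a - s<..\<xi>}" using Fdiff axb s0 by simp
      then show ?thesis by (metis abs_of_nonneg measure_nonneg)
    qed
    moreover have "\<bar>\<xi> - (a - s)\<bar> \<le> 2 * s" using axb bas s0 by auto
    ultimately show ?thesis using that[of "a - s"] L axb s0 by auto
  qed
  have dpos: "0 < \<bar>\<xi> - \<eta>\<bar>" using \<eta>(1) by simp
  have s2B: "2 * s \<le> 2 * B" unfolding s_def by simp
  have R1: "(P / 2) / (2 * B) powr \<alpha> \<le> \<bar>distr_fun \<nu> \<xi> - distr_fun \<nu> \<eta>\<bar> / \<bar>\<xi> - \<eta>\<bar> powr \<alpha>"
  proof (rule frac_le)
    show "0 \<le> \<bar>distr_fun \<nu> \<xi> - distr_fun \<nu> \<eta>\<bar>" by simp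
    show "P / 2 \<le> \<bar>distr_fun \<nu> \<xi> - distr_fun \<nu> \<eta>\<bar>" by (rule \<eta>(3))
    show "0 < \<bar>\<xi> - \<eta>\<bar> powr \<alpha>" using dpos by simp
    show "\<bar>\<xi> - \<eta>\<bar> powr \<alpha> \<le> (2 * B) powr \<alpha>" using \<eta>(2) s2B ap by (intro powr_mono2) auto
  qed
  have lnP: "birkhoff n \<psi> y - ln C - ln 2 \<le> ln (P / 2)"
  proof -
    have "ln (exp (birkhoff n \<psi> y) / C / 2) \<le> ln (P / 2)"
      using PG C(1) P0 by (subst ln_le_cancel_iff) auto
    moreover have "ln (exp (birkhoff n \<psi> y) / C / 2) = birkhoff n \<psi> y - ln C - ln 2"
      using C(1) by (simp add: ln_div ln_mult)
    ultimately show ?thesis by simp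
  qed
  have lnB: "ln (2 * B) \<le> ln 2 + ln \<delta>' + birkhoff n (phi f X) y - real K * ln m0 + real n * \<epsilon>"
  proof -
    have "ln (2 * B) = ln 2 + ln \<delta>' + (\<Sum>k<n-K. phi f X ((shift ^^ k) y) + \<epsilon>)"
      unfolding B_def using \<delta>'0 by (simp add: ln_mult)
    then show ?thesis using SB by linarith
  qed
  have lnR: "ln (max M 1) < ln ((P / 2) / (2 * B) powr \<alpha>)"
  proof -
    have "ln ((P / 2) / (2 * B) powr \<alpha>) = ln (P / 2) - ln ((2 * B) powr \<alpha>)"
      using P0 B0 by (subst ln_div) auto
    also have "ln ((2 * B) powr \<alpha>) = \<alpha> * ln (2 * B)" by simp
    finally have "ln ((P / 2) / (2 * B) powr \<alpha>) = ln (P / 2) - \<alpha> * ln (2 * B)" .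
    moreover have "\<alpha> * ln (2 * B) \<le> \<alpha> * (ln 2 + ln \<delta>' + birkhoff n (phi f X) y - real K * ln m0 + real n * \<epsilon>)"
      using lnB ap by (intro mult_left_mono) auto
    moreover have "\<alpha> * (ln 2 + ln \<delta>' + birkhoff n (phi f X) y - real K * ln m0 + real n * \<epsilon>) =
        \<alpha> * ln 2 + \<alpha> * ln \<delta>' + \<alpha> * birkhoff n (phi f X) y - \<alpha> * (real K * ln m0) + real n * (\<gamma> / 2)"
      using a\<epsilon> by (simp add: algebra_simps)
    moreover have "c0 = ln C + ln 2 + \<alpha> * ln 2 + \<alpha> * ln \<delta>' - \<alpha> * (real K * ln m0)"
      unfolding c0_def by (simp add: algebra_simps)
    ultimately have "ln ((P / 2) / (2 * B) powr \<alpha>) \<ge>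
        (birkhoff n \<psi> y - \<alpha> * birkhoff n (phi f X) y) - c0 - real n * (\<gamma> / 2)"
      using lnP by linarith
    moreover have "real n * \<gamma> - real n * (\<gamma> / 2) = real n * (\<gamma> / 2)" by simp
    ultimately show ?thesis using BG nbig by linarith
  qed
  have R2: "M \<le> (P / 2) / (2 * B) powr \<alpha>"
  proof -
    have "max M 1 < (P / 2) / (2 * B) powr \<alpha>"
      using lnR P0 B0 by (subst (asm) ln_less_cancel_iff) auto
    then show ?thesis by linarith
  qed
  have "dist \<eta> \<xi> < \<delta>0"
  proof -
    have "dist \<eta> \<xi> \<le> 2 * s" using \<eta>(2) by (simp add: dist_real_def abs_minus_commute)
    also have "\<dots> \<le> 2 * (lam ^ n * (r - l))" unfolding s_def by simp
    finally show ?thesis using lamn by linarith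
  qed
  then show ?thesis using \<eta>(1) R1 R2 by (intro exI[of _ \<eta>]) auto
qed

end



theorem lemma2p2:
  fixes d :: nat and X :: "real set" and f :: "nat \<Rightarrow> real \<Rightarrow> real"
    and \<psi> :: "(nat \<Rightarrow> nat) \<Rightarrow> real" and \<nu> :: "real measure" and \<alpha> :: real
  assumes setting: "ifs_setting d X f"
    and hol: "holder_seq d \<psi>"
    and neg: "\<forall>x\<in>seqs d. \<psi> x < 0"
    and press: "has_pressure d \<psi> 0"
    and above: "\<forall>x\<in>seqs d. \<psi> x > \<alpha> * phi f X x"
    and gibbs: "gibbs_measure d X f \<psi> \<nu>"
    and alpha_pos: "\<alpha> > 0"
    and xi: "\<xi> \<in> L_star f d X"
  shows "Limsup (at \<xi>)
           (\<lambda>\<eta>. ereal (\<bar>distr_fun \<nu> \<xi> - distr_fun \<nu> \<eta>\<bar> / \<bar>\<xi> - \<eta>\<bar> powr \<alpha>)) = \<infinity>"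
proof -
  have xiL: "\<xi> \<in> limit_set f d X" using xi by (simp add: L_star_def)
  have w0: "words d 0 = {[]}" by (auto simp: words_def)
  have "\<xi> \<in> (\<Union>w\<in>words d 0. comp_word f w ` X)" using xiL unfolding limit_set_def by blast
  then have xiX: "\<xi> \<in> X" using w0 by simp
  have cX: "compact X" using setting unfolding ifs_setting_def by (elim conjE) assumption
  have coX: "connected X" using setting unfolding ifs_setting_def by (elim conjE) assumption
  have intX: "\<forall>a\<le>d. f a ` X \<subseteq> interior X" using setting unfolding ifs_setting_def by (elim conjE) assumption
  obtain l r where lr: "X = {l..r}" using connected_compact_interval_1 cX coX by blast
  have "l < r"
  proof (rule ccontr)
    assume "\<not> l < r"
    then have "interior X = {}" using lr by auto
    moreover have "f 0 \<xi> \<in> interior X" using intX xiX by blast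
    ultimately show False by simp
  qed
  interpret ifs d X f l r using setting lr \<open>l < r\<close> by unfold_locales
  show ?thesis
  proof (rule ereal_top)
    fix B :: real
    show "ereal B \<le> Limsup (at \<xi>) (\<lambda>\<eta>. ereal (\<bar>distr_fun \<nu> \<xi> - distr_fun \<nu> \<eta>\<bar> / \<bar>\<xi> - \<eta>\<bar> powr \<alpha>))"
      unfolding Limsup_def
    proof (rule INF_greatest)
      fix P assume "P \<in> {P. eventually P (at \<xi>)}"
      then obtain d0 where d0: "d0 > 0" "\<forall>x. x \<noteq> \<xi> \<and> dist x \<xi> < d0 \<longrightarrow> P x"
        unfolding eventually_at by auto
      obtain \<eta> where \<eta>: "\<eta> \<noteq> \<xi>" "dist \<eta> \<xi> < d0"
          "B \<le> \<bar>distr_fun \<nu> \<xi> - distr_fun \<nu> \<eta>\<bar> / \<bar>\<xi> - \<eta>\<bar> powr \<alpha>"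
        using main[OF hol above gibbs alpha_pos xiL d0(1)] by blast
      show "ereal B \<le> (SUP x\<in>{x. P x}. ereal (\<bar>distr_fun \<nu> \<xi> - distr_fun \<nu> x\<bar> / \<bar>\<xi> - x\<bar> powr \<alpha>))"
        by (rule SUP_upper2[of \<eta>]) (use \<eta> d0 in auto)
    qed
  qed
qed


end
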